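(* If $\mu\in\mathcal{L}$ is unimodal, then $\mu$ is either a point mass or a Cauchy distribution (i.e. $F_\mu(z)=z+b$ for some $b\in\mathbb{C}$ with $\operatorname{Im} b\ge 0$).
   Context: For a probability measure $\mu$ on $\mathbb{R}$, $G_\mu(z)=\int\frac{d\mu(x)}{z-x}$ and $F_\mu=1/G_\mu$ on the upper half-plane $\mathbb{C}^+$. $\mathcal{L}$ is the set of probability measures $\mu$ on $\mathbb{R}$ with $F_\mu(z+2\pi)=F_\mu(z)+2\pi$ for all $z\in\mathbb{C}^+$. A probability measure $\mu$ is unimodal (with mode $c$) if $d\mu(x)=\mu(\{c\})\delta_c+f(x)\,dx$ with $f$ non-increasing on $[c,\infty)$ and non-decreasing on $(-\infty,c]$. The Cauchy distributions are the measures $\frac{1}{\pi}\frac{t}{(x-a)^2+t^2}dx$, $a\in\mathbb{R}$, $t>0$. *)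

theory Defs
  imports "HOL-Probability.Probability"
begin

definition cauchy_transform :: "real measure \<Rightarrow> complex \<Rightarrow> complex" where
  "cauchy_transform \<mu> z = (\<integral>x. 1 / (z - complex_of_real x) \<partial>\<mu>)"

definition F_transform :: "real measure \<Rightarrow> complex \<Rightarrow> complex" where
  "F_transform \<mu> z = 1 / cauchy_transform \<mu> z"

definition real_prob :: "real measure \<Rightarrow> bool" where
  "real_prob \<mu> \<longleftrightarrow> prob_space \<mu> \<and> sets \<mu> = sets borel"

definition class_L :: "real measure set" where
  "class_L = {\<mu>. real_prob \<mu> \<and>
     (\<forall>z. Im z > 0 \<longrightarrow>
        F_transform \<mu> (z + 2 * complex_of_real pi) = F_transform \<mu> z + 2 * complex_of_real pi)}"

definition unimodal_at :: "real measure \<Rightarrow> real \<Rightarrow> bool" where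
  "unimodal_at \<mu> c \<longleftrightarrow> (\<exists>f :: real \<Rightarrow> real.
     f \<in> borel_measurable borel \<and> (\<forall>x. 0 \<le> f x) \<and>
     (\<forall>x y. c \<le> x \<longrightarrow> x \<le> y \<longrightarrow> f y \<le> f x) \<and>
     (\<forall>x y. x \<le> y \<longrightarrow> y \<le> c \<longrightarrow> f x \<le> f y) \<and>
     (\<forall>A \<in> sets borel. emeasure \<mu> A =
        emeasure \<mu> {c} * indicator A c + (\<integral>\<^sup>+ x. ennreal (f x) * indicator A x \<partial>lborel)))"

definition unimodal :: "real measure \<Rightarrow> bool" where
  "unimodal \<mu> \<longleftrightarrow> (\<exists>c. unimodal_at \<mu> c)"

definition cauchy_distr :: "real \<Rightarrow> real \<Rightarrow> real measure" where
  "cauchy_distr a t = density lborel (\<lambda>x. ennreal (t / (pi * ((x - a)\<^sup>2 + t\<^sup>2))))"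

end

theory Submission
  imports Defs "HOL-Complex_Analysis.Complex_Analysis" "HOL-Real_Asymp.Real_Asymp"
begin

definition Pk :: "real \<Rightarrow> real \<Rightarrow> real" where
  "Pk y u = y / (pi * (u\<^sup>2 + y\<^sup>2))"

definition pois :: "real measure \<Rightarrow> real \<Rightarrow> real \<Rightarrow> real" where
  "pois \<mu> y x = (\<integral>t. Pk y (x - t) \<partial>\<mu>)"

definition AT :: "real \<Rightarrow> real \<Rightarrow> real \<Rightarrow> real \<Rightarrow> real" where
  "AT s m a b = (arctan ((b - m) / s) - arctan ((a - m) / s)) / pi"

lemma real_probD:
  assumes "real_prob \<mu>"
  shows "prob_space \<mu>" "sets \<mu> = sets borel" "space \<mu> = UNIV"
  using assms unfolding real_prob_def by (auto dest: sets_eq_imp_space_eq)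

lemma Pk_pos: "y > 0 \<Longrightarrow> Pk y u > 0"
  unfolding Pk_def by (auto intro!: divide_pos_pos mult_pos_pos add_nonneg_pos)

lemma Pk_le: "y > 0 \<Longrightarrow> Pk y u \<le> 1 / (pi * y)"
  proof -
  assume y: "y > 0"
  have "y / (pi * (u\<^sup>2 + y\<^sup>2)) \<le> y / (pi * y\<^sup>2)"
    using y by (intro divide_left_mono mult_left_mono) (auto intro!: mult_pos_pos add_nonneg_pos)
  also have "\<dots> = 1 / (pi * y)" using y by (simp add: power2_eq_square)
  finally show ?thesis unfolding Pk_def .
qed

lemma Pk_cont: assumes "y > 0" shows "continuous_on UNIV (\<lambda>t. Pk y (x - t))"
proof -
  have nz: "pi * ((x - t)\<^sup>2 + y\<^sup>2) \<noteq> 0" for t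
    using assms by (intro mult_pos_pos add_nonneg_pos less_imp_neq[symmetric]) auto
  show ?thesis unfolding Pk_def by (intro continuous_intros) (use nz in auto)
qed

lemma Pk_alt: "Pk y u = (y / (u\<^sup>2 + y\<^sup>2)) / pi"
  unfolding Pk_def by simp

lemma G_integrable:
  assumes "real_prob \<mu>" "Im z > 0"
  shows "integrable \<mu> (\<lambda>x. 1 / (z - complex_of_real x))"
proof -
  interpret prob_space \<mu> using real_probD[OF assms(1)] by auto
  have sets: "sets \<mu> = sets borel" using real_probD[OF assms(1)] by auto
  have meas: "(\<lambda>x. 1 / (z - complex_of_real x)) \<in> borel_measurable borel"
  proof (rule borel_measurable_continuous_onI)
    have "z - complex_of_real x \<noteq> 0" for x using assms(2) by (auto simp: complex_eq_iff)
    then show "continuous_on UNIV (\<lambda>x. 1 / (z - complex_of_real x))"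
      by (intro continuous_intros) auto
  qed
  show ?thesis
  proof (rule integrable_const_bound[where B="1 / Im z"])
    show "AE x in \<mu>. norm (1 / (z - complex_of_real x)) \<le> 1 / Im z"
    proof (rule AE_I2)
      fix x
      have "Im z \<le> cmod (z - complex_of_real x)"
        using abs_Im_le_cmod[of "z - complex_of_real x"] by simp
      moreover have "0 < cmod (z - complex_of_real x) * Im z"
        using assms(2) \<open>Im z \<le> cmod (z - complex_of_real x)\<close> by (intro mult_pos_pos) linarith+
      ultimately have "1 / cmod (z - complex_of_real x) \<le> 1 / Im z"
        by (intro divide_left_mono) simp_all
      then show "norm (1 / (z - complex_of_real x)) \<le> 1 / Im z"
        by (simp add: norm_divide)
    qed
    show "(\<lambda>x. 1 / (z - complex_of_real x)) \<in> borel_measurable \<mu>"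
      unfolding measurable_cong_sets[OF sets refl] by (rule meas)
  qed
qed

lemma Pk_integrable:
  assumes "real_prob \<mu>" "y > 0"
  shows "integrable \<mu> (\<lambda>t. Pk y (x - t))"
proof -
  interpret prob_space \<mu> using real_probD[OF assms(1)] by auto
  have sets: "sets \<mu> = sets borel" using real_probD[OF assms(1)] by auto
  show ?thesis
  proof (rule integrable_const_bound[where B="1 / (pi * y)"])
    show "AE t in \<mu>. norm (Pk y (x - t)) \<le> 1 / (pi * y)"
    proof (rule AE_I2)
      fix t
      have "norm (Pk y (x - t)) = Pk y (x - t)" using Pk_pos[OF assms(2), of "x - t"] by simp
      then show "norm (Pk y (x - t)) \<le> 1 / (pi * y)" using Pk_le[OF assms(2), of "x - t"] by simp
    qed
    show "(\<lambda>t. Pk y (x - t)) \<in> borel_measurable \<mu>"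
      unfolding measurable_cong_sets[OF sets refl] by (rule borel_measurable_continuous_onI[OF Pk_cont[OF assms(2)]])
  qed
qed

lemma Im_inv_shift:
  assumes "Im z > 0"
  shows "Im (1 / (z - complex_of_real t)) = - pi * Pk (Im z) (Re z - t)"
proof -
  have pos: "(Re z - t)\<^sup>2 + (Im z)\<^sup>2 > 0" using assms by (auto intro: add_nonneg_pos)
  have "Im (1 / (z - complex_of_real t)) = - Im z / ((Re z - t)\<^sup>2 + (Im z)\<^sup>2)"
    by (simp add: Im_divide power2_eq_square)
  also have "\<dots> = - pi * Pk (Im z) (Re z - t)"
    unfolding Pk_alt[of "Im z" "Re z - t"] by (simp add: add.commute[of "(Im z)\<^sup>2"])
  finally show ?thesis .
qed

lemma Im_G:
  assumes "real_prob \<mu>" "Im z > 0"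
  shows "Im (cauchy_transform \<mu> z) = - pi * pois \<mu> (Im z) (Re z)"
proof -
  have "has_bochner_integral \<mu> (\<lambda>x. Im (1 / (z - complex_of_real x))) (Im (cauchy_transform \<mu> z))"
    unfolding cauchy_transform_def
    by (intro has_bochner_integral_Im has_bochner_integral_integrable G_integrable assms)
  then have "Im (cauchy_transform \<mu> z) = (\<integral>x. Im (1 / (z - complex_of_real x)) \<partial>\<mu>)"
    by (simp add: has_bochner_integral_iff)
  also have "\<dots> = (\<integral>x. - pi * Pk (Im z) (Re z - x) \<partial>\<mu>)"
    using Im_inv_shift[OF assms(2)] by simp
  also have "\<dots> = - pi * pois \<mu> (Im z) (Re z)"
    unfolding pois_def by simp
  finally show ?thesis .
qed

lemma pois_pos:
  assumes "real_prob \<mu>" "y > 0"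
  shows "pois \<mu> y x > 0"
proof -
  interpret prob_space \<mu> using real_probD[OF assms(1)] by auto
  have "(\<integral>t. Pk y (x - t) \<partial>\<mu>) \<ge> (\<integral>t. 0 \<partial>\<mu>)"
    using Pk_pos[OF assms(2)] by (intro integral_mono Pk_integrable assms) (auto intro: less_imp_le)
  moreover have "(\<integral>t. Pk y (x - t) \<partial>\<mu>) \<noteq> 0"
  proof
    assume "(\<integral>t. Pk y (x - t) \<partial>\<mu>) = 0"
    then have "AE t in \<mu>. Pk y (x - t) = 0"
      using integral_nonneg_eq_0_iff_AE[OF Pk_integrable[OF assms]] Pk_pos[OF assms(2)]
      by (auto intro: less_imp_le)
    then have "AE t in \<mu>. False" using Pk_pos[OF assms(2)] by (auto simp: less_le)
    then show False using AE_False prob_space.emeasure_space_1 prob_space_axioms by auto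
  qed
  ultimately show ?thesis unfolding pois_def by simp
qed

lemma Im_G_neg:
  assumes "real_prob \<mu>" "Im z > 0"
  shows "Im (cauchy_transform \<mu> z) < 0"
  using Im_G[OF assms] pois_pos[OF assms] by simp

lemma Im_F_pos:
  assumes "real_prob \<mu>" "Im z > 0"
  shows "Im (F_transform \<mu> z) > 0" "cauchy_transform \<mu> z \<noteq> 0"
proof -
  have n: "Im (cauchy_transform \<mu> z) < 0" by (rule Im_G_neg[OF assms])
  then show "cauchy_transform \<mu> z \<noteq> 0" by auto
  have e: "Im (F_transform \<mu> z) = - (Im (cauchy_transform \<mu> z) / (cmod (cauchy_transform \<mu> z))\<^sup>2)"
    unfolding F_transform_def by (simp only: Im_divide cmod_power2) simp
  have p: "(cmod (cauchy_transform \<mu> z))\<^sup>2 > 0" using n by auto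
  have "Im (cauchy_transform \<mu> z) / (cmod (cauchy_transform \<mu> z))\<^sup>2 < 0"
    by (rule divide_neg_pos[OF n p])
  then show "Im (F_transform \<mu> z) > 0" unfolding e by linarith
qed

lemma aux_div: "(c::real) \<noteq> 0 \<Longrightarrow> c * a = b \<Longrightarrow> a = b / c"
  by (auto simp: field_simps)

lemma F_shift_nat:
  assumes per: "\<forall>z. Im z > 0 \<longrightarrow> F_transform \<mu> (z + 2 * complex_of_real pi) = F_transform \<mu> z + 2 * complex_of_real pi"
    and z: "Im z > 0"
  shows "F_transform \<mu> (z + 2 * complex_of_real pi * of_nat n) = F_transform \<mu> z + 2 * complex_of_real pi * of_nat n"
proof (induction n)
  case 0 then show ?case by simp
next
  case (Suc n)
  have e1: "z + 2 * complex_of_real pi * of_nat (Suc n) = (z + 2 * complex_of_real pi * of_nat n) + 2 * complex_of_real pi"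
    by (simp add: algebra_simps)
  have "Im (z + 2 * complex_of_real pi * of_nat n) > 0" using z by simp
  then have "F_transform \<mu> ((z + 2 * complex_of_real pi * of_nat n) + 2 * complex_of_real pi) =
      F_transform \<mu> (z + 2 * complex_of_real pi * of_nat n) + 2 * complex_of_real pi"
    using per by blast
  then have "F_transform \<mu> (z + 2 * complex_of_real pi * of_nat (Suc n)) =
      F_transform \<mu> (z + 2 * complex_of_real pi * of_nat n) + 2 * complex_of_real pi"
    unfolding e1 .
  also have "\<dots> = F_transform \<mu> z + 2 * complex_of_real pi * of_nat (Suc n)"
    using Suc by (simp add: algebra_simps)
  finally show ?case .
qed

lemma pois_lattice:
  assumes rp: "real_prob \<mu>"
    and per: "\<forall>z. Im z > 0 \<longrightarrow> F_transform \<mu> (z + 2 * complex_of_real pi) = F_transform \<mu> z + 2 * complex_of_real pi"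
    and y: "y > 0"
  shows "pois \<mu> y (s + 2 * pi * real n) =
    (Im (F_transform \<mu> (Complex s y)) / ((Re (F_transform \<mu> (Complex s y)) + 2 * pi * real n)\<^sup>2 + (Im (F_transform \<mu> (Complex s y)))\<^sup>2)) / pi"
proof -
  define w where "w = F_transform \<mu> (Complex s y)"
  define z where "z = Complex s y + 2 * complex_of_real pi * of_nat n"
  have zI: "Im z = y" "Re z = s + 2 * pi * real n" unfolding z_def by simp_all
  have Fz: "F_transform \<mu> z = w + 2 * complex_of_real pi * of_nat n"
    unfolding z_def w_def using F_shift_nat[OF per, of "Complex s y" n] y by simp
  have Gnz: "cauchy_transform \<mu> z \<noteq> 0" using Im_F_pos(2)[OF rp, of z] zI y by simp
  have "cauchy_transform \<mu> z = 1 / F_transform \<mu> z"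
    using Gnz by (simp add: F_transform_def)
  then have "Im (cauchy_transform \<mu> z) = Im (1 / (w + 2 * complex_of_real pi * of_nat n))"
    using Fz by simp
  also have "\<dots> = - Im w / ((Re w + 2 * pi * real n)\<^sup>2 + (Im w)\<^sup>2)"
    by (simp add: Im_divide power2_eq_square)
  finally have e: "- pi * pois \<mu> y (s + 2 * pi * real n) = - Im w / ((Re w + 2 * pi * real n)\<^sup>2 + (Im w)\<^sup>2)"
    using Im_G[OF rp, of z] zI y by simp
  then have e2: "pi * pois \<mu> y (s + 2 * pi * real n) = Im w / ((Re w + 2 * pi * real n)\<^sup>2 + (Im w)\<^sup>2)"
    by simp
  show ?thesis unfolding w_def[symmetric] by (rule aux_div[OF pi_neq_zero e2])
qed

lemma lattice_lim:
  assumes "B > 0"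
  shows "((\<lambda>x::real. x\<^sup>2 * ((B / ((x + A)\<^sup>2 + B\<^sup>2)) / pi)) \<longlongrightarrow> B / pi) at_top"
  using assms by (real_asymp simp: field_simps)


lemma Pk_measurable[measurable]: "f \<in> borel_measurable M \<Longrightarrow> (\<lambda>t. Pk y (f t)) \<in> borel_measurable M"
  unfolding Pk_def by (intro borel_measurable_divide borel_measurable_times borel_measurable_add
    borel_measurable_power measurable_const) auto

lemma far_bound:
  assumes y: "y > 0" and x: "x > 0" and u: "u > x / 2"
  shows "x\<^sup>2 * Pk y u \<le> 4 * y / pi"
proof -
  have "(x / 2)\<^sup>2 \<le> u\<^sup>2" using x u by (intro power_mono) auto
  then have a: "x\<^sup>2 / 4 \<le> u\<^sup>2" by (simp add: power_divide)
  have "0 \<le> y\<^sup>2" by simp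
  with a have h1: "x\<^sup>2 / 4 \<le> u\<^sup>2 + y\<^sup>2" by linarith
  have "0 < u\<^sup>2 + y\<^sup>2" using y by (intro add_nonneg_pos) auto
  then have h2: "Pk y u \<le> y / (pi * (x\<^sup>2 / 4))"
    unfolding Pk_def using y x h1 by (intro divide_left_mono mult_left_mono mult_pos_pos) auto
  have "x\<^sup>2 * Pk y u \<le> x\<^sup>2 * (y / (pi * (x\<^sup>2 / 4)))"
    using h2 by (intro mult_left_mono) auto
  also have "\<dots> = 4 * y / pi" using x by (simp add: field_simps)
  finally show ?thesis .
qed

lemma Pk_lim:
  assumes y: "y > 0"
  shows "((\<lambda>x. x\<^sup>2 * Pk y (x + d - t)) \<longlongrightarrow> y / pi) at_top"
  unfolding Pk_def using y by (real_asymp simp: field_simps)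

lemma far_lim:
  assumes rp: "real_prob \<mu>" and y: "y > 0"
  shows "((\<lambda>x. \<integral>t. x\<^sup>2 * (Pk y (x + d - t) * indicator {..< x/2 + d} t) \<partial>\<mu>) \<longlongrightarrow> y / pi) at_top"
proof -
  interpret prob_space \<mu> using real_probD[OF rp] by auto
  have sets: "sets \<mu> = sets borel" using real_probD[OF rp] by auto
  have "((\<lambda>x. \<integral>t. x\<^sup>2 * (Pk y (x + d - t) * indicator {..< x/2 + d} t) \<partial>\<mu>) \<longlongrightarrow> (\<integral>t. y / pi \<partial>\<mu>)) at_top"
  proof (rule integral_dominated_convergence_at_top[where w="\<lambda>_. 4 * y / pi"])
    show "(\<lambda>t. y / pi) \<in> borel_measurable \<mu>" by simp
    show "(\<lambda>t. x\<^sup>2 * (Pk y (x + d - t) * indicator {..< x/2 + d} t)) \<in> borel_measurable \<mu>" for x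
      unfolding measurable_cong_sets[OF sets refl] by measurable
    show "integrable \<mu> (\<lambda>_. 4 * y / pi)" by simp
    show "AE t in \<mu>. ((\<lambda>x. x\<^sup>2 * (Pk y (x + d - t) * indicator {..< x/2 + d} t)) \<longlongrightarrow> y / pi) at_top"
    proof (rule AE_I2)
      fix t
      have ev: "\<forall>\<^sub>F x in at_top. x\<^sup>2 * Pk y (x + d - t) = x\<^sup>2 * (Pk y (x + d - t) * indicator {..< x/2 + d} t)"
        using eventually_gt_at_top[of "2 * (t - d)"] by eventually_elim (auto simp: indicator_def)
      show "((\<lambda>x. x\<^sup>2 * (Pk y (x + d - t) * indicator {..< x/2 + d} t)) \<longlongrightarrow> y / pi) at_top"
        by (rule Lim_transform_eventually[OF Pk_lim[OF y] ev])
    qed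
    show "\<forall>\<^sub>F x in at_top. AE t in \<mu>. norm (x\<^sup>2 * (Pk y (x + d - t) * indicator {..< x/2 + d} t)) \<le> 4 * y / pi"
      using eventually_gt_at_top[of 0]
    proof eventually_elim
      case (elim x)
      show ?case
      proof (rule AE_I2)
        fix t
        show "norm (x\<^sup>2 * (Pk y (x + d - t) * indicator {..< x/2 + d} t)) \<le> 4 * y / pi"
        proof (cases "t < x/2 + d")
          case True
          then have "x\<^sup>2 * Pk y (x + d - t) \<le> 4 * y / pi"
            using elim y by (intro far_bound) auto
          moreover have "0 \<le> x\<^sup>2 * Pk y (x + d - t)" using Pk_pos[OF y] by (simp add: less_imp_le)
          ultimately show ?thesis using True by (simp add: indicator_def)
        next
          case False
          then show ?thesis using y by (simp add: indicator_def)
        qed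
      qed
    qed
  qed
  then show ?thesis using prob_space by simp
qed

lemma pois_split:
  assumes rp: "real_prob \<mu>" and y: "y > 0"
  shows "pois \<mu> y x = (\<integral>t. Pk y (x - t) * indicator {..<a} t \<partial>\<mu>) + (\<integral>t. Pk y (x - t) * indicator {a..} t \<partial>\<mu>)"
proof -
  have sets: "sets \<mu> = sets borel" using real_probD[OF rp] by auto
  have i1: "integrable \<mu> (\<lambda>t. Pk y (x - t) * indicator {..<a} t)"
    by (rule integrable_real_mult_indicator) (auto simp: sets intro: Pk_integrable[OF rp y])
  have i2: "integrable \<mu> (\<lambda>t. Pk y (x - t) * indicator {a..} t)"
    by (rule integrable_real_mult_indicator) (auto simp: sets intro: Pk_integrable[OF rp y])
  have "pois \<mu> y x = (\<integral>t. Pk y (x - t) * indicator {..<a} t + Pk y (x - t) * indicator {a..} t \<partial>\<mu>)"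
    unfolding pois_def by (intro Bochner_Integration.integral_cong) (auto simp: indicator_def)
  also have "\<dots> = (\<integral>t. Pk y (x - t) * indicator {..<a} t \<partial>\<mu>) + (\<integral>t. Pk y (x - t) * indicator {a..} t \<partial>\<mu>)"
    by (rule Bochner_Integration.integral_add[OF i1 i2])
  finally show ?thesis .
qed

lemma unimodal_nn:
  assumes sets: "sets \<mu> = sets borel" and f: "f \<in> borel_measurable borel"
    and hyp: "\<forall>A \<in> sets borel. emeasure \<mu> A =
        emeasure \<mu> {c} * indicator A c + (\<integral>\<^sup>+ x. ennreal (f x) * indicator A x \<partial>lborel)"
    and g: "g \<in> borel_measurable borel"
  shows "(\<integral>\<^sup>+ x. g x \<partial>\<mu>) = emeasure \<mu> {c} * g c + (\<integral>\<^sup>+ x. ennreal (f x) * g x \<partial>lborel)"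
  using g
proof (induction rule: borel_measurable_induct)
  case (cong u v)
  then have "u = v" by auto
  then show ?case using cong(4) by simp
next
  case (set A)
  have "(\<integral>\<^sup>+ x. indicator A x \<partial>\<mu>) = emeasure \<mu> A"
    using set sets by (intro nn_integral_indicator) simp
  also have "\<dots> = emeasure \<mu> {c} * indicator A c + (\<integral>\<^sup>+ x. ennreal (f x) * indicator A x \<partial>lborel)"
    using hyp set by blast
  finally show ?case .
next
  case (mult u k)
  have um: "u \<in> borel_measurable \<mu>" using mult(2) by (simp add: measurable_cong_sets[OF sets refl])
  have "(\<integral>\<^sup>+ x. k * u x \<partial>\<mu>) = k * (\<integral>\<^sup>+ x. u x \<partial>\<mu>)"
    by (rule nn_integral_cmult[OF um])
  moreover have "(\<integral>\<^sup>+ x. ennreal (f x) * (k * u x) \<partial>lborel) = k * (\<integral>\<^sup>+ x. ennreal (f x) * u x \<partial>lborel)"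
    using mult(2) f by (subst nn_integral_cmult[symmetric]) (auto simp: mult_ac)
  ultimately show ?case using mult(4) by (simp add: distrib_left mult_ac)
next
  case (add u v)
  have um: "u \<in> borel_measurable \<mu>" "v \<in> borel_measurable \<mu>"
    using add by (simp_all add: measurable_cong_sets[OF sets refl])
  have "(\<integral>\<^sup>+ x. v x + u x \<partial>\<mu>) = (\<integral>\<^sup>+ x. v x \<partial>\<mu>) + (\<integral>\<^sup>+ x. u x \<partial>\<mu>)"
    using um by (intro nn_integral_add) auto
  moreover have "(\<integral>\<^sup>+ x. ennreal (f x) * (v x + u x) \<partial>lborel) =
      (\<integral>\<^sup>+ x. ennreal (f x) * v x \<partial>lborel) + (\<integral>\<^sup>+ x. ennreal (f x) * u x \<partial>lborel)"
    using add f by (subst nn_integral_add[symmetric]) (auto simp: distrib_left)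
  moreover have IHu: "(\<integral>\<^sup>+ x. u x \<partial>\<mu>) = emeasure \<mu> {c} * u c + (\<integral>\<^sup>+ x. ennreal (f x) * u x \<partial>lborel)"
    using add by blast
  moreover have IHv: "(\<integral>\<^sup>+ x. v x \<partial>\<mu>) = emeasure \<mu> {c} * v c + (\<integral>\<^sup>+ x. ennreal (f x) * v x \<partial>lborel)"
    using add by blast
  ultimately show ?case by (simp add: distrib_left add_ac)
next
  case (seq U)
  have inc: "incseq U" using seq by blast
  have Um: "\<And>i. U i \<in> borel_measurable borel" using seq by blast
  have IH: "\<And>i. (\<integral>\<^sup>+ x. U i x \<partial>\<mu>) = emeasure \<mu> {c} * U i c + (\<integral>\<^sup>+ x. ennreal (f x) * U i x \<partial>lborel)"
    using seq by blast
  have um: "\<And>i. U i \<in> borel_measurable \<mu>" using Um by (simp add: measurable_cong_sets[OF sets refl])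
  have "(\<integral>\<^sup>+ x. (SUP i. U i) x \<partial>\<mu>) = (\<integral>\<^sup>+ x. (SUP i. U i x) \<partial>\<mu>)" by (simp add: image_comp)
  also have "\<dots> = (SUP i. \<integral>\<^sup>+ x. U i x \<partial>\<mu>)"
    using inc um by (intro nn_integral_monotone_convergence_SUP) auto
  also have "\<dots> = (SUP i. emeasure \<mu> {c} * U i c + (\<integral>\<^sup>+ x. ennreal (f x) * U i x \<partial>lborel))"
    using IH by simp
  also have "\<dots> = (SUP i. emeasure \<mu> {c} * U i c) + (SUP i. \<integral>\<^sup>+ x. ennreal (f x) * U i x \<partial>lborel)"
  proof (rule ennreal_SUP_add)
    show "incseq (\<lambda>i. emeasure \<mu> {c} * U i c)"
      using inc by (auto simp: incseq_def le_fun_def intro: mult_left_mono)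
    show "incseq (\<lambda>i. \<integral>\<^sup>+ x. ennreal (f x) * U i x \<partial>lborel)"
      using inc by (auto simp: incseq_def le_fun_def intro!: nn_integral_mono mult_left_mono)
  qed
  also have "(SUP i. emeasure \<mu> {c} * U i c) = emeasure \<mu> {c} * (SUP i. U i) c"
    by (simp add: SUP_mult_left_ennreal image_comp)
  also have "(SUP i. \<integral>\<^sup>+ x. ennreal (f x) * U i x \<partial>lborel) = (\<integral>\<^sup>+ x. (SUP i. ennreal (f x) * U i x) \<partial>lborel)"
    using inc Um f
    by (intro nn_integral_monotone_convergence_SUP[symmetric])
       (auto simp: incseq_def le_fun_def intro: mult_left_mono)
  also have "\<dots> = (\<integral>\<^sup>+ x. ennreal (f x) * (SUP i. U i) x \<partial>lborel)"
    by (simp add: SUP_mult_left_ennreal image_comp)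
  finally show ?case .
qed

lemma near_nn:
  assumes rp: "real_prob \<mu>" and f: "f \<in> borel_measurable borel"
    and hyp: "\<forall>A \<in> sets borel. emeasure \<mu> A =
        emeasure \<mu> {c} * indicator A c + (\<integral>\<^sup>+ x. ennreal (f x) * indicator A x \<partial>lborel)"
    and cW: "c < x - W"
  shows "(\<integral>\<^sup>+ t. ennreal (Pk y (x - t) * indicator {x - W..} t) \<partial>\<mu>) =
    (\<integral>\<^sup>+ u. ennreal (f (x + u)) * ennreal (Pk y (- u) * indicator {- W..} u) \<partial>lborel)"
proof -
  have sets: "sets \<mu> = sets borel" using real_probD[OF rp] by auto
  have g: "(\<lambda>t. ennreal (Pk y (x - t) * indicator {x - W..} t)) \<in> borel_measurable borel"
    by measurable
  have "(\<integral>\<^sup>+ t. ennreal (Pk y (x - t) * indicator {x - W..} t) \<partial>\<mu>) =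
      emeasure \<mu> {c} * ennreal (Pk y (x - c) * indicator {x - W..} c) +
      (\<integral>\<^sup>+ t. ennreal (f t) * ennreal (Pk y (x - t) * indicator {x - W..} t) \<partial>lborel)"
    by (rule unimodal_nn[OF sets f hyp g])
  also have "ennreal (Pk y (x - c) * indicator {x - W..} c) = 0"
    using cW by (simp add: indicator_def)
  also have "(\<integral>\<^sup>+ t. ennreal (f t) * ennreal (Pk y (x - t) * indicator {x - W..} t) \<partial>lborel) =
      (\<integral>\<^sup>+ u. ennreal (f (x + u)) * ennreal (Pk y (x - (x + u)) * indicator {x - W..} (x + u)) \<partial>lborel)"
  proof -
    note f[measurable]
    have m: "(\<lambda>t. ennreal (f t) * ennreal (Pk y (x - t) * indicator {x - W..} t)) \<in> borel_measurable borel"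
      by measurable
    show ?thesis using nn_integral_real_affine[OF m, of 1 x] by simp
  qed
  also have "\<dots> = (\<integral>\<^sup>+ u. ennreal (f (x + u)) * ennreal (Pk y (- u) * indicator {- W..} u) \<partial>lborel)"
    by (intro nn_integral_cong) (auto simp: indicator_def)
  finally show ?thesis by simp
qed

lemma near_mono:
  assumes rp: "real_prob \<mu>" and f: "f \<in> borel_measurable borel" and fnn: "\<forall>x. 0 \<le> f x"
    and dec: "\<forall>x y. c \<le> x \<longrightarrow> x \<le> y \<longrightarrow> f y \<le> f x"
    and hyp: "\<forall>A \<in> sets borel. emeasure \<mu> A =
        emeasure \<mu> {c} * indicator A c + (\<integral>\<^sup>+ x. ennreal (f x) * indicator A x \<partial>lborel)"
    and y: "y > 0" and x21: "x2 \<le> x1" and cW: "c < x2 - W"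
  shows "(\<integral>t. Pk y (x1 - t) * indicator {x1 - W..} t \<partial>\<mu>) \<le> (\<integral>t. Pk y (x2 - t) * indicator {x2 - W..} t \<partial>\<mu>)"
proof -
  have sets: "sets \<mu> = sets borel" using real_probD[OF rp] by auto
  have meas: "(\<lambda>t. Pk y (x - t) * indicator {x - W..} t) \<in> borel_measurable \<mu>" for x
    unfolding measurable_cong_sets[OF sets refl] by measurable
  have nonneg: "0 \<le> Pk y (x - t) * indicator {x - W..} t" for x t
    using Pk_pos[OF y, of "x - t"] by (simp add: indicator_def)
  have int: "integrable \<mu> (\<lambda>t. Pk y (x - t) * indicator {x - W..} t)" for x
    by (rule integrable_real_mult_indicator) (auto simp: sets intro: Pk_integrable[OF rp y])
  have le: "(\<integral>\<^sup>+ t. ennreal (Pk y (x1 - t) * indicator {x1 - W..} t) \<partial>\<mu>) \<le>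
      (\<integral>\<^sup>+ t. ennreal (Pk y (x2 - t) * indicator {x2 - W..} t) \<partial>\<mu>)"
  proof -
    have "(\<integral>\<^sup>+ t. ennreal (Pk y (x1 - t) * indicator {x1 - W..} t) \<partial>\<mu>) =
      (\<integral>\<^sup>+ u. ennreal (f (x1 + u)) * ennreal (Pk y (- u) * indicator {- W..} u) \<partial>lborel)"
      using cW x21 by (intro near_nn[OF rp f hyp]) auto
    also have "\<dots> \<le> (\<integral>\<^sup>+ u. ennreal (f (x2 + u)) * ennreal (Pk y (- u) * indicator {- W..} u) \<partial>lborel)"
    proof (intro nn_integral_mono)
      fix u
      show "ennreal (f (x1 + u)) * ennreal (Pk y (- u) * indicator {- W..} u) \<le>
            ennreal (f (x2 + u)) * ennreal (Pk y (- u) * indicator {- W..} u)"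
      proof (cases "u \<ge> - W")
        case True
        then have "f (x1 + u) \<le> f (x2 + u)" using dec cW x21 by auto
        then show ?thesis by (intro mult_right_mono ennreal_leI) auto
      next
        case False
        then show ?thesis by (simp add: indicator_def)
      qed
    qed
    also have "\<dots> = (\<integral>\<^sup>+ t. ennreal (Pk y (x2 - t) * indicator {x2 - W..} t) \<partial>\<mu>)"
      using cW by (intro near_nn[OF rp f hyp, symmetric]) auto
    finally show ?thesis .
  qed
  have fin: "(\<integral>\<^sup>+ t. ennreal (Pk y (x2 - t) * indicator {x2 - W..} t) \<partial>\<mu>) < top"
    using integrableD(2)[OF int[of x2]] by (simp add: top.not_eq_extremum)
  have "(\<integral>t. Pk y (x1 - t) * indicator {x1 - W..} t \<partial>\<mu>) = enn2real (\<integral>\<^sup>+ t. ennreal (Pk y (x1 - t) * indicator {x1 - W..} t) \<partial>\<mu>)"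
    by (intro integral_eq_nn_integral meas AE_I2 nonneg)
  also have "\<dots> \<le> enn2real (\<integral>\<^sup>+ t. ennreal (Pk y (x2 - t) * indicator {x2 - W..} t) \<partial>\<mu>)"
    by (rule enn2real_mono[OF le fin])
  also have "\<dots> = (\<integral>t. Pk y (x2 - t) * indicator {x2 - W..} t \<partial>\<mu>)"
    by (intro integral_eq_nn_integral[symmetric] meas AE_I2 nonneg)
  finally show ?thesis .
qed


lemma key_le:
  assumes rp: "real_prob \<mu>"
    and per: "\<forall>z. Im z > 0 \<longrightarrow> F_transform \<mu> (z + 2 * complex_of_real pi) = F_transform \<mu> z + 2 * complex_of_real pi"
    and f: "f \<in> borel_measurable borel" and fnn: "\<forall>x. 0 \<le> f x"
    and dec: "\<forall>x y. c \<le> x \<longrightarrow> x \<le> y \<longrightarrow> f y \<le> f x"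
    and hyp: "\<forall>A \<in> sets borel. emeasure \<mu> A =
        emeasure \<mu> {c} * indicator A c + (\<integral>\<^sup>+ x. ennreal (f x) * indicator A x \<partial>lborel)"
    and y: "y > 0"
  shows "Im (F_transform \<mu> (Complex s1 y)) \<le> Im (F_transform \<mu> (Complex s2 y))"
proof -
  define A1 where "A1 = Re (F_transform \<mu> (Complex s1 y))"
  define B1 where "B1 = Im (F_transform \<mu> (Complex s1 y))"
  define A2 where "A2 = Re (F_transform \<mu> (Complex s2 y))"
  define B2 where "B2 = Im (F_transform \<mu> (Complex s2 y))"
  have B1: "B1 > 0" unfolding B1_def using Im_F_pos(1)[OF rp, of "Complex s1 y"] y by simp
  have B2: "B2 > 0" unfolding B2_def using Im_F_pos(1)[OF rp, of "Complex s2 y"] y by simp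
  obtain k :: nat where k: "(s2 - s1) / (2 * pi) \<le> real k" using real_arch_simple by blast
  then have k': "s2 - s1 \<le> 2 * pi * real k" by (simp add: pos_divide_le_eq mult.commute)
  define d where "d = s2 - s1 - 2 * pi * real k"
  have d0: "d \<le> 0" using k' unfolding d_def by simp
  define X where "X = (\<lambda>m::nat. s1 + 2 * pi * real k + 2 * pi * real m)"
  have Xlim: "filterlim X at_top sequentially" unfolding X_def by real_asymp
  have L1: "((\<lambda>m. (X m)\<^sup>2 * pois \<mu> y (X m)) \<longlongrightarrow> B1 / pi) sequentially"
  proof -
    have e: "pois \<mu> y (X m) = (B1 / ((X m + (A1 - s1))\<^sup>2 + B1\<^sup>2)) / pi" for m
    proof -
      have eq1: "s1 + 2 * pi * real (m + k) = X m" by (simp add: X_def algebra_simps)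
      have eq2: "A1 + 2 * pi * real (m + k) = X m + (A1 - s1)" by (simp add: X_def algebra_simps)
      have P: "pois \<mu> y (s1 + 2 * pi * real (m + k)) = (B1 / ((A1 + 2 * pi * real (m + k))\<^sup>2 + B1\<^sup>2)) / pi"
        using pois_lattice[OF rp per y, of s1 "m + k"] unfolding A1_def B1_def .
      show ?thesis using P unfolding eq1 eq2 .
    qed
    show ?thesis unfolding e by (rule filterlim_compose[OF lattice_lim[OF B1] Xlim])
  qed
  have L2: "((\<lambda>m. (X m)\<^sup>2 * pois \<mu> y (X m + d)) \<longlongrightarrow> B2 / pi) sequentially"
  proof -
    have e: "pois \<mu> y (X m + d) = (B2 / ((X m + (A2 - s1 - 2 * pi * real k))\<^sup>2 + B2\<^sup>2)) / pi" for m
    proof -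
      have eq1: "s2 + 2 * pi * real m = X m + d" by (simp add: X_def d_def algebra_simps)
      have eq2: "A2 + 2 * pi * real m = X m + (A2 - s1 - 2 * pi * real k)" by (simp add: X_def algebra_simps)
      have P: "pois \<mu> y (s2 + 2 * pi * real m) = (B2 / ((A2 + 2 * pi * real m)\<^sup>2 + B2\<^sup>2)) / pi"
        using pois_lattice[OF rp per y, of s2 m] unfolding A2_def B2_def .
      show ?thesis using P unfolding eq1 eq2 .
    qed
    show ?thesis unfolding e by (rule filterlim_compose[OF lattice_lim[OF B2] Xlim])
  qed
  have L3: "((\<lambda>m. \<integral>t. (X m)\<^sup>2 * (Pk y (X m - t) * indicator {..< X m / 2} t) \<partial>\<mu>) \<longlongrightarrow> y / pi) sequentially"
    using filterlim_compose[OF far_lim[OF rp y, of 0] Xlim] by simp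
  have L4: "((\<lambda>m. \<integral>t. (X m)\<^sup>2 * (Pk y (X m + d - t) * indicator {..< X m / 2 + d} t) \<partial>\<mu>) \<longlongrightarrow> y / pi) sequentially"
    using filterlim_compose[OF far_lim[OF rp y, of d] Xlim] by simp
  have ev: "\<forall>\<^sub>F m in sequentially. c < X m / 2 + d"
    using filterlim_at_top_dense[THEN iffD1, OF Xlim, rule_format, of "2 * (c - d)"]
    by eventually_elim simp
  have ineq: "\<forall>\<^sub>F m in sequentially.
      (X m)\<^sup>2 * pois \<mu> y (X m) - (\<integral>t. (X m)\<^sup>2 * (Pk y (X m - t) * indicator {..< X m / 2} t) \<partial>\<mu>) \<le>
      (X m)\<^sup>2 * pois \<mu> y (X m + d) - (\<integral>t. (X m)\<^sup>2 * (Pk y (X m + d - t) * indicator {..< X m / 2 + d} t) \<partial>\<mu>)"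
    using ev
  proof eventually_elim
    case (elim m)
    have s1: "pois \<mu> y (X m) = (\<integral>t. Pk y (X m - t) * indicator {..<X m / 2} t \<partial>\<mu>) + (\<integral>t. Pk y (X m - t) * indicator {X m / 2..} t \<partial>\<mu>)"
      by (rule pois_split[OF rp y])
    have s2: "pois \<mu> y (X m + d) = (\<integral>t. Pk y (X m + d - t) * indicator {..<X m / 2 + d} t \<partial>\<mu>) + (\<integral>t. Pk y (X m + d - t) * indicator {X m / 2 + d..} t \<partial>\<mu>)"
      by (rule pois_split[OF rp y])
    have w1: "X m - X m / 2 = X m / 2" by simp
    have w2: "X m + d - X m / 2 = X m / 2 + d" by simp
    have mono0: "(\<integral>t. Pk y (X m - t) * indicator {X m - X m / 2..} t \<partial>\<mu>) \<le> (\<integral>t. Pk y (X m + d - t) * indicator {X m + d - X m / 2..} t \<partial>\<mu>)"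
      using elim d0 by (intro near_mono[OF rp f fnn dec hyp y]) (auto simp: algebra_simps)
    have mono: "(\<integral>t. Pk y (X m - t) * indicator {X m / 2..} t \<partial>\<mu>) \<le> (\<integral>t. Pk y (X m + d - t) * indicator {X m / 2 + d..} t \<partial>\<mu>)"
      using mono0 unfolding w1 w2 .
    have e1: "(X m)\<^sup>2 * pois \<mu> y (X m) - (\<integral>t. (X m)\<^sup>2 * (Pk y (X m - t) * indicator {..< X m / 2} t) \<partial>\<mu>)
        = (X m)\<^sup>2 * (\<integral>t. Pk y (X m - t) * indicator {X m / 2..} t \<partial>\<mu>)"
      unfolding s1 by (simp add: algebra_simps)
    have e2: "(X m)\<^sup>2 * pois \<mu> y (X m + d) - (\<integral>t. (X m)\<^sup>2 * (Pk y (X m + d - t) * indicator {..< X m / 2 + d} t) \<partial>\<mu>)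
        = (X m)\<^sup>2 * (\<integral>t. Pk y (X m + d - t) * indicator {X m / 2 + d..} t \<partial>\<mu>)"
      unfolding s2 by (simp add: algebra_simps)
    show ?case unfolding e1 e2 using mono by (intro mult_left_mono) auto
  qed
  have "B1 / pi - y / pi \<le> B2 / pi - y / pi"
    by (rule tendsto_le[OF trivial_limit_sequentially tendsto_diff[OF L2 L4] tendsto_diff[OF L1 L3] ineq])
  then have "B1 / pi \<le> B2 / pi" by simp
  then have "B1 \<le> B2" by (simp add: divide_le_cancel)
  then show ?thesis unfolding B1_def B2_def .
qed

lemma dir_deriv:
  fixes g :: "complex \<Rightarrow> complex"
  assumes g: "(g has_field_derivative D) (at z)"
    and ev: "eventually (\<lambda>h. Im (g (z + dir * of_real h)) = Im (g z)) (nhds (0::real))"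
  shows "Im (dir * D) = 0"
proof -
  have f: "((\<lambda>h::real. z + dir * of_real h) has_vector_derivative dir) (at 0)"
    by (auto intro!: derivative_eq_intros)
  have g0: "(g has_field_derivative D) (at ((\<lambda>h::real. z + dir * of_real h) 0))"
    using g by simp
  have "((g \<circ> (\<lambda>h::real. z + dir * of_real h)) has_vector_derivative (dir * D)) (at 0)"
    by (rule field_vector_diff_chain_at[OF f g0])
  from has_field_derivative_Im[OF this]
  have d1: "((\<lambda>h. Im (g (z + dir * of_real h))) has_field_derivative Im (dir * D)) (at 0)"
    by (simp add: o_def)
  have d2: "((\<lambda>h. Im (g (z + dir * of_real h))) has_field_derivative 0) (at 0)"
    using DERIV_cong_ev[OF refl ev refl, of 0] by (simp add: DERIV_const)
  show ?thesis using DERIV_unique[OF d1 d2] .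
qed

lemma ball_Im:
  assumes "w \<in> ball z (Im z / 2)"
  shows "Im w > Im z / 2"
proof -
  have "\<bar>Im (z - w)\<bar> \<le> cmod (z - w)" by (rule abs_Im_le_cmod)
  moreover have "cmod (z - w) < Im z / 2" using assms by (simp add: dist_norm)
  ultimately show ?thesis by simp
qed

lemma G_deriv:
  assumes rp: "real_prob \<mu>" and z: "Im z > 0"
  shows "(cauchy_transform \<mu> has_field_derivative (\<integral>x. - 1 / (z - complex_of_real x)\<^sup>2 \<partial>\<mu>)) (at z)"
proof -
  interpret prob_space \<mu> using real_probD[OF rp] by auto
  have sets: "sets \<mu> = sets borel" using real_probD[OF rp] by auto
  define r where "r = Im z / 2"
  have r: "r > 0" using z by (simp add: r_def)
  have nz: "w - complex_of_real x \<noteq> 0" if "Im w > 0" for w x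
    using that by (auto simp: complex_eq_iff)
  have q: "(cauchy_transform \<mu> w - cauchy_transform \<mu> z) / (w - z) =
      (\<integral>x. - 1 / ((w - complex_of_real x) * (z - complex_of_real x)) \<partial>\<mu>)"
    if w: "w \<in> ball z r - {z}" for w
  proof -
    have wI: "Im w > 0" using ball_Im[of w z] w r by (auto simp: r_def)
    have wz: "w - z \<noteq> 0" using w by auto
    have "cauchy_transform \<mu> w - cauchy_transform \<mu> z =
        (\<integral>x. 1 / (w - complex_of_real x) - 1 / (z - complex_of_real x) \<partial>\<mu>)"
      unfolding cauchy_transform_def
      by (rule Bochner_Integration.integral_diff[symmetric]) (intro G_integrable[OF rp] wI z)+
    then have "(cauchy_transform \<mu> w - cauchy_transform \<mu> z) / (w - z) =
        (\<integral>x. (1 / (w - complex_of_real x) - 1 / (z - complex_of_real x)) / (w - z) \<partial>\<mu>)"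
      by simp
    also have "\<dots> = (\<integral>x. - 1 / ((w - complex_of_real x) * (z - complex_of_real x)) \<partial>\<mu>)"
    proof (intro Bochner_Integration.integral_cong refl)
      fix x
      have a: "w - complex_of_real x \<noteq> 0" "z - complex_of_real x \<noteq> 0" using nz wI z by auto
      have "1 / (w - complex_of_real x) - 1 / (z - complex_of_real x) =
          (z - w) / ((w - complex_of_real x) * (z - complex_of_real x))"
        using a by (simp add: diff_frac_eq)
      then have "(1 / (w - complex_of_real x) - 1 / (z - complex_of_real x)) / (w - z) =
          ((z - w) / (w - z)) / ((w - complex_of_real x) * (z - complex_of_real x))"
        by (simp add: divide_divide_eq_left mult_ac)
      moreover have "(z - w) / (w - z) = -1" using wz by (metis divide_minus_left divide_self minus_diff_eq)
      ultimately show "(1 / (w - complex_of_real x) - 1 / (z - complex_of_real x)) / (w - z) =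
          - 1 / ((w - complex_of_real x) * (z - complex_of_real x))"
        by simp
    qed
    finally show ?thesis .
  qed
  have lim: "((\<lambda>w. (cauchy_transform \<mu> w - cauchy_transform \<mu> z) / (w - z)) \<longlongrightarrow>
      (\<integral>x. - 1 / (z - complex_of_real x)\<^sup>2 \<partial>\<mu>)) (at z within ball z r)"
    unfolding tendsto_at_iff_sequentially
  proof (intro allI impI)
    fix X :: "nat \<Rightarrow> complex"
    assume X: "\<forall>i. X i \<in> ball z r - {z}" and Xz: "X \<longlonglongrightarrow> z"
    have XI: "Im (X i) > r" for i using ball_Im[of "X i" z] X by (auto simp: r_def)
    have "(\<lambda>i. \<integral>x. - 1 / ((X i - complex_of_real x) * (z - complex_of_real x)) \<partial>\<mu>) \<longlonglongrightarrow>
        (\<integral>x. - 1 / (z - complex_of_real x)\<^sup>2 \<partial>\<mu>)"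
    proof (rule integral_dominated_convergence[where w="\<lambda>_. 1 / (r * Im z)"])
      show "(\<lambda>x. - 1 / (z - complex_of_real x)\<^sup>2) \<in> borel_measurable \<mu>"
        unfolding measurable_cong_sets[OF sets refl] by measurable
      show "(\<lambda>x. - 1 / ((X i - complex_of_real x) * (z - complex_of_real x))) \<in> borel_measurable \<mu>" for i
        unfolding measurable_cong_sets[OF sets refl] by measurable
      show "integrable \<mu> (\<lambda>_. 1 / (r * Im z))" by simp
      show "AE x in \<mu>. (\<lambda>i. - 1 / ((X i - complex_of_real x) * (z - complex_of_real x))) \<longlonglongrightarrow> - 1 / (z - complex_of_real x)\<^sup>2"
      proof (rule AE_I2)
        fix x
        have "(\<lambda>i. - 1 / ((X i - complex_of_real x) * (z - complex_of_real x))) \<longlonglongrightarrow>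
            - 1 / ((z - complex_of_real x) * (z - complex_of_real x))"
          using nz[OF z, of x] by (intro tendsto_intros Xz) auto
        then show "(\<lambda>i. - 1 / ((X i - complex_of_real x) * (z - complex_of_real x))) \<longlonglongrightarrow> - 1 / (z - complex_of_real x)\<^sup>2"
          by (simp add: power2_eq_square)
      qed
      show "AE x in \<mu>. norm (- 1 / ((X i - complex_of_real x) * (z - complex_of_real x))) \<le> 1 / (r * Im z)" for i
      proof (rule AE_I2)
        fix x
        have a: "Im (X i) \<le> cmod (X i - complex_of_real x)"
          using abs_Im_le_cmod[of "X i - complex_of_real x"] by simp
        have b: "Im z \<le> cmod (z - complex_of_real x)"
          using abs_Im_le_cmod[of "z - complex_of_real x"] by simp
        have "r * Im z \<le> cmod (X i - complex_of_real x) * cmod (z - complex_of_real x)"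
          using a b XI[of i] r z by (intro mult_mono) auto
        moreover have "0 < r * Im z" using r z by simp
        ultimately have "1 / (cmod (X i - complex_of_real x) * cmod (z - complex_of_real x)) \<le> 1 / (r * Im z)"
          by (intro divide_left_mono) auto
        then show "norm (- 1 / ((X i - complex_of_real x) * (z - complex_of_real x))) \<le> 1 / (r * Im z)"
          by (simp add: norm_divide norm_mult)
      qed
    qed
    moreover have "(\<lambda>i. \<integral>x. - 1 / ((X i - complex_of_real x) * (z - complex_of_real x)) \<partial>\<mu>) =
        ((\<lambda>w. (cauchy_transform \<mu> w - cauchy_transform \<mu> z) / (w - z)) \<circ> X)"
      using q X by (auto simp: o_def)
    ultimately show "((\<lambda>w. (cauchy_transform \<mu> w - cauchy_transform \<mu> z) / (w - z)) \<circ> X) \<longlonglongrightarrow>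
        (\<integral>x. - 1 / (z - complex_of_real x)\<^sup>2 \<partial>\<mu>)" by simp
  qed
  have "at z within ball z r = at z" using r by (intro at_within_open) auto
  with lim show ?thesis unfolding has_field_derivative_iff by simp
qed


lemma F_linear:
  assumes rp: "real_prob \<mu>"
    and per: "\<forall>z. Im z > 0 \<longrightarrow> F_transform \<mu> (z + 2 * complex_of_real pi) = F_transform \<mu> z + 2 * complex_of_real pi"
    and cst: "\<And>x y. y > 0 \<Longrightarrow> Im (F_transform \<mu> (Complex x y)) = Im (F_transform \<mu> (Complex 0 y))"
  shows "\<exists>b. \<forall>z. Im z > 0 \<longrightarrow> F_transform \<mu> z = z + b"
proof -
  define H where "H = {z. Im z > 0}"
  have oH: "open H" unfolding H_def by (rule open_halfspace_Im_gt)
  have cH: "convex H" unfolding H_def by (rule convex_halfspace_Im_gt)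
  have Gh: "cauchy_transform \<mu> holomorphic_on H"
  proof -
    have "\<forall>x\<in>H. \<exists>f'. (cauchy_transform \<mu> has_field_derivative f') (at x)"
      using G_deriv[OF rp] unfolding H_def by blast
    then show ?thesis using holomorphic_on_open[OF oH] by blast
  qed
  have Fe: "F_transform \<mu> = (\<lambda>z. 1 / cauchy_transform \<mu> z)" by (rule ext) (simp add: F_transform_def)
  have Fh: "F_transform \<mu> holomorphic_on H"
    unfolding Fe using Im_F_pos(2)[OF rp] Gh by (intro holomorphic_intros) (auto simp: H_def)
  define F' where "F' = deriv (F_transform \<mu>)"
  have F'h: "F' holomorphic_on H" unfolding F'_def by (rule holomorphic_deriv[OF Fh oH])
  have dF: "(F_transform \<mu> has_field_derivative F' z) (at z)" if "z \<in> H" for z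
    unfolding F'_def by (rule holomorphic_derivI[OF Fh oH that])
  have dF': "(F' has_field_derivative deriv F' z) (at z)" if "z \<in> H" for z
    by (rule holomorphic_derivI[OF F'h oH that])
  have ImF': "Im (F' z) = 0" if z: "z \<in> H" for z
  proof -
    have "Im (F_transform \<mu> (z + 1 * of_real h)) = Im (F_transform \<mu> z)" for h
    proof -
      have "z + 1 * of_real h = Complex (Re z + h) (Im z)" by (simp add: complex_eq_iff)
      moreover have "z = Complex (Re z) (Im z)" by simp
      ultimately show ?thesis using cst[of "Im z"] z unfolding H_def by (metis mem_Collect_eq)
    qed
    then have "Im (1 * F' z) = 0"
      by (intro dir_deriv[OF dF[OF z]]) auto
    then show ?thesis by simp
  qed
  have F''0: "deriv F' z = 0" if z: "z \<in> H" for z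
  proof -
    have evH: "eventually (\<lambda>h::real. z + dir * of_real h \<in> H) (nhds 0)" if "dir = 1 \<or> dir = \<i>" for dir
    proof -
      have "((\<lambda>h::real. Im z + h) \<longlongrightarrow> Im z + 0) (nhds 0)"
        by (intro tendsto_intros filterlim_ident)
      then have "eventually (\<lambda>h::real. 0 < Im z + h) (nhds 0)"
        using z by (intro order_tendstoD(1)) (auto simp: H_def)
      then show ?thesis
        by (rule eventually_mono) (use that z in \<open>auto simp: H_def\<close>)
    qed
    have ev: "eventually (\<lambda>h. Im (F' (z + dir * of_real h)) = Im (F' z)) (nhds (0::real))" if "dir = 1 \<or> dir = \<i>" for dir
      using evH[OF that] by eventually_elim (simp add: ImF' z)
    have "Im (1 * deriv F' z) = 0" by (rule dir_deriv[OF dF'[OF z] ev]) simp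
    moreover have "Im (\<i> * deriv F' z) = 0" by (rule dir_deriv[OF dF'[OF z] ev]) simp
    ultimately show ?thesis by (simp add: complex_eq_iff)
  qed
  obtain k where k: "\<forall>w\<in>H. F' w = k"
  proof -
    have "\<exists>c. \<forall>x\<in>H. F' x = c"
    proof (rule has_field_derivative_zero_constant[OF cH])
      fix x assume "x \<in> H"
      then show "(F' has_field_derivative 0) (at x within H)"
        using dF'[of x] F''0[of x] by (auto intro: has_field_derivative_at_within)
    qed
    then show ?thesis using that by blast
  qed
  obtain b where b: "\<forall>w\<in>H. F_transform \<mu> w - k * w = b"
  proof -
    have "\<exists>c. \<forall>x\<in>H. F_transform \<mu> x - k * x = c"
    proof (rule has_field_derivative_zero_constant[OF cH])
      fix x assume x: "x \<in> H"
      have "((\<lambda>w. F_transform \<mu> w - k * w) has_field_derivative (F' x - k)) (at x)"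
        using dF[OF x] by (auto intro!: derivative_eq_intros)
      then show "((\<lambda>w. F_transform \<mu> w - k * w) has_field_derivative 0) (at x within H)"
        using k x by (auto intro: has_field_derivative_at_within)
    qed
    then show ?thesis using that by blast
  qed
  have iH: "\<i> \<in> H" "\<i> + 2 * complex_of_real pi \<in> H" by (simp_all add: H_def)
  have "F_transform \<mu> (\<i> + 2 * complex_of_real pi) = F_transform \<mu> \<i> + 2 * complex_of_real pi"
    using per by simp
  then have "k * (\<i> + 2 * complex_of_real pi) + b = k * \<i> + b + 2 * complex_of_real pi"
    using b iH by (metis diff_eq_eq add.commute)
  then have "k * (2 * complex_of_real pi) = 2 * complex_of_real pi" by (simp add: algebra_simps)
  then have k1: "k = 1" by simp
  show ?thesis
  proof (intro exI allI impI)
    fix z assume "Im z > 0"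
    then have "z \<in> H" by (simp add: H_def)
    then show "F_transform \<mu> z = z + b" using b k1 by (metis diff_eq_eq add.commute mult_1)
  qed
qed

lemma AT_nonneg: "s > 0 \<Longrightarrow> a \<le> b \<Longrightarrow> 0 \<le> AT s m a b"
  unfolding AT_def by (auto intro!: divide_nonneg_pos arctan_monotone' divide_right_mono)

lemma AT_le1: "AT s m a b \<le> 1"
proof -
  have "arctan ((b - m) / s) - arctan ((a - m) / s) < pi"
    using arctan_ubound[of "(b - m) / s"] arctan_lbound[of "(a - m) / s"] by linarith
  then show ?thesis unfolding AT_def by (simp add: divide_le_eq)
qed

lemma Pk_FTC:
  assumes s: "s > 0" and ab: "a \<le> b"
  shows "(\<integral>\<^sup>+x. ennreal (Pk s (x - m)) * indicator {a..b} x \<partial>lborel) = ennreal (AT s m a b)"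
proof -
  have d: "((\<lambda>x. arctan ((x - m) / s) / pi) has_real_derivative Pk s (x - m)) (at x)" for x
  proof -
    have "((\<lambda>x. arctan ((x - m) / s) / pi) has_real_derivative
        inverse (1 + ((x - m) / s)\<^sup>2) * (1 / s) / pi) (at x)"
      using s by (auto intro!: derivative_eq_intros DERIV_arctan[THEN DERIV_chain2])
    moreover have "inverse (1 + ((x - m) / s)\<^sup>2) * (1 / s) / pi = Pk s (x - m)"
    proof -
      have "1 + ((x - m) / s)\<^sup>2 = ((x - m)\<^sup>2 + s\<^sup>2) / s\<^sup>2"
        using s by (simp add: field_simps power2_eq_square)
      then show ?thesis using s unfolding Pk_def
        by (simp add: power2_eq_square field_simps)
    qed
    ultimately show ?thesis by simp
  qed
  have "(\<integral>\<^sup>+x. ennreal (Pk s (x - m)) * indicator {a..b} x \<partial>lborel) =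
      ennreal (arctan ((b - m) / s) / pi - arctan ((a - m) / s) / pi)"
    by (rule nn_integral_FTC_Icc[OF _ d _ ab]) (use Pk_pos[OF s] in \<open>auto intro: less_imp_le\<close>)
  also have "arctan ((b - m) / s) / pi - arctan ((a - m) / s) / pi = AT s m a b"
    unfolding AT_def by (simp add: diff_divide_distrib)
  finally show ?thesis .
qed

lemma AT_integrable:
  assumes rp: "real_prob \<mu>" and y: "y > 0"
  shows "integrable \<mu> (\<lambda>t. AT y t a b)"
proof -
  interpret prob_space \<mu> using real_probD[OF rp] by auto
  have sets: "sets \<mu> = sets borel" using real_probD[OF rp] by auto
  show ?thesis
  proof (rule integrable_const_bound[where B=1])
    show "AE t in \<mu>. norm (AT y t a b) \<le> 1"
    proof (rule AE_I2)
      fix t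
      have "- (arctan ((b - t) / y) - arctan ((a - t) / y)) < pi"
        using arctan_ubound[of "(a - t) / y"] arctan_lbound[of "(b - t) / y"] by linarith
      then have "- AT y t a b \<le> 1" unfolding AT_def by (simp add: le_divide_eq)
      then show "norm (AT y t a b) \<le> 1" using AT_le1[of y t a b] by simp
    qed
    show "(\<lambda>t. AT y t a b) \<in> borel_measurable \<mu>"
      unfolding measurable_cong_sets[OF sets refl] AT_def by measurable
  qed
qed

lemma fubini_AT:
  assumes rp: "real_prob \<mu>" and y: "y > 0" and ab: "a \<le> b"
  shows "(\<integral>\<^sup>+x. ennreal (pois \<mu> y x) * indicator {a..b} x \<partial>lborel) = ennreal (\<integral>t. AT y t a b \<partial>\<mu>)"
proof -
  interpret prob_space \<mu> using real_probD[OF rp] by auto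
  have sets: "sets \<mu> = sets borel" using real_probD[OF rp] by auto
  interpret P: pair_sigma_finite \<mu> lborel
    unfolding pair_sigma_finite_def
    using prob_space_imp_sigma_finite[OF prob_space_axioms] lborel.sigma_finite_measure_axioms by auto
  have e1: "ennreal (pois \<mu> y x) = (\<integral>\<^sup>+t. ennreal (Pk y (x - t)) \<partial>\<mu>)" for x
    unfolding pois_def
    by (rule nn_integral_eq_integral[symmetric, OF Pk_integrable[OF rp y]])
       (use Pk_pos[OF y] in \<open>auto intro: less_imp_le\<close>)
  have "(\<integral>\<^sup>+x. ennreal (pois \<mu> y x) * indicator {a..b} x \<partial>lborel) =
      (\<integral>\<^sup>+x. (\<integral>\<^sup>+t. ennreal (Pk y (x - t)) * indicator {a..b} x \<partial>\<mu>) \<partial>lborel)"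
  proof (intro nn_integral_cong)
    fix x
    have m: "(\<lambda>t. ennreal (Pk y (x - t))) \<in> borel_measurable \<mu>"
      unfolding measurable_cong_sets[OF sets refl] by measurable
    show "ennreal (pois \<mu> y x) * indicator {a..b} x = (\<integral>\<^sup>+t. ennreal (Pk y (x - t)) * indicator {a..b} x \<partial>\<mu>)"
      unfolding e1 by (rule nn_integral_multc[OF m, symmetric])
  qed
  also have "\<dots> = (\<integral>\<^sup>+t. (\<integral>\<^sup>+x. ennreal (Pk y (x - t)) * indicator {a..b} x \<partial>lborel) \<partial>\<mu>)"
  proof (rule P.Fubini')
    show "case_prod (\<lambda>t x. ennreal (Pk y (x - t)) * indicator {a..b} x) \<in> borel_measurable (\<mu> \<Otimes>\<^sub>M lborel)"
      unfolding measurable_cong_sets[OF sets_pair_measure_cong[OF sets refl] refl] by measurable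
  qed
  also have "\<dots> = (\<integral>\<^sup>+t. ennreal (AT y t a b) \<partial>\<mu>)"
    by (intro nn_integral_cong Pk_FTC y ab)
  also have "\<dots> = ennreal (\<integral>t. AT y t a b \<partial>\<mu>)"
    by (rule nn_integral_eq_integral[OF AT_integrable[OF rp y]]) (use AT_nonneg[OF y ab] in auto)
  finally show ?thesis .
qed


lemma Im_b_nonneg:
  assumes rp: "real_prob \<mu>" and lin: "\<forall>z. Im z > 0 \<longrightarrow> F_transform \<mu> z = z + b"
  shows "Im b \<ge> 0"
proof (rule ccontr)
  assume "\<not> Im b \<ge> 0"
  then have n: "Im b < 0" by simp
  define z where "z = Complex 0 (- Im b / 2)"
  have zI: "Im z > 0" using n by (simp add: z_def)
  have "Im (F_transform \<mu> z) > 0" by (rule Im_F_pos(1)[OF rp zI])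
  moreover have "Im (F_transform \<mu> z) = Im b / 2" using lin zI by (simp add: z_def)
  ultimately show False using n by simp
qed

lemma pois_lin:
  assumes rp: "real_prob \<mu>" and lin: "\<forall>z. Im z > 0 \<longrightarrow> F_transform \<mu> z = z + b" and y: "y > 0"
  shows "pois \<mu> y x = Pk (y + Im b) (x + Re b)"
proof -
  define z where "z = Complex x y"
  have zI: "Im z > 0" using y by (simp add: z_def)
  have Gnz: "cauchy_transform \<mu> z \<noteq> 0" by (rule Im_F_pos(2)[OF rp zI])
  have "cauchy_transform \<mu> z = 1 / F_transform \<mu> z" using Gnz by (simp add: F_transform_def)
  also have "F_transform \<mu> z = Complex (x + Re b) (y + Im b)" using lin zI by (simp add: z_def complex_eq_iff)
  finally have "Im (cauchy_transform \<mu> z) = - (y + Im b) / ((x + Re b)\<^sup>2 + (y + Im b)\<^sup>2)"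
    by (simp add: Im_divide power2_eq_square)
  moreover have "Im (cauchy_transform \<mu> z) = - pi * pois \<mu> y x" using Im_G[OF rp zI] by (simp add: z_def)
  ultimately have X: "- (pi * pois \<mu> y x) = - (y + Im b) / ((x + Re b)\<^sup>2 + (y + Im b)\<^sup>2)" by simp
  have "pi * pois \<mu> y x = - (- (pi * pois \<mu> y x))" by simp
  also have "\<dots> = (y + Im b) / ((x + Re b)\<^sup>2 + (y + Im b)\<^sup>2)"
    unfolding X by (simp only: minus_divide_left[symmetric])
  finally have "pi * pois \<mu> y x = (y + Im b) / ((x + Re b)\<^sup>2 + (y + Im b)\<^sup>2)" .
  then have "pois \<mu> y x = ((y + Im b) / ((x + Re b)\<^sup>2 + (y + Im b)\<^sup>2)) / pi"
    by (rule aux_div[OF pi_neq_zero])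
  then show ?thesis by (simp add: Pk_alt)
qed

lemma AT_eq:
  assumes rp: "real_prob \<mu>" and lin: "\<forall>z. Im z > 0 \<longrightarrow> F_transform \<mu> z = z + b"
    and y: "y > 0" and ab: "a \<le> c"
  shows "(\<integral>t. AT y t a c \<partial>\<mu>) = AT (y + Im b) (- Re b) a c"
proof -
  have yb: "y + Im b > 0" using Im_b_nonneg[OF rp lin] y by simp
  have "ennreal (\<integral>t. AT y t a c \<partial>\<mu>) = (\<integral>\<^sup>+x. ennreal (pois \<mu> y x) * indicator {a..c} x \<partial>lborel)"
    by (rule fubini_AT[OF rp y ab, symmetric])
  also have "\<dots> = (\<integral>\<^sup>+x. ennreal (Pk (y + Im b) (x - (- Re b))) * indicator {a..c} x \<partial>lborel)"
    using pois_lin[OF rp lin y] by simp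
  also have "\<dots> = ennreal (AT (y + Im b) (- Re b) a c)" by (rule Pk_FTC[OF yb ab])
  finally have e: "ennreal (\<integral>t. AT y t a c \<partial>\<mu>) = ennreal (AT (y + Im b) (- Re b) a c)" .
  have "0 \<le> (\<integral>t. AT y t a c \<partial>\<mu>)" by (intro integral_nonneg_AE AE_I2 AT_nonneg y ab)
  moreover have "0 \<le> AT (y + Im b) (- Re b) a c" by (intro AT_nonneg yb ab)
  ultimately show ?thesis using e by simp
qed

definition phi :: "real \<Rightarrow> real \<Rightarrow> real \<Rightarrow> real" where
  "phi a c t = (if a < t \<and> t < c then 1 else if t = a \<or> t = c then 1 / 2 else 0)"

lemma arctan_lim:
  "((\<lambda>n. arctan (u / (1 / (real n + 1)))) \<longlongrightarrow> pi / 2 * sgn u) sequentially"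
proof -
  have e: "u / (1 / (real n + 1)) = u * (real n + 1)" for n by simp
  consider "u > 0" | "u < 0" | "u = 0" by linarith
  then show ?thesis
  proof cases
    case 1
    have "filterlim (\<lambda>n. u * (real n + 1)) at_top sequentially" using 1 by real_asymp
    then show ?thesis unfolding e using 1 by (simp add: filterlim_compose[OF tendsto_arctan_at_top])
  next
    case 2
    have "filterlim (\<lambda>n. u * (real n + 1)) at_bot sequentially" using 2 by real_asymp
    then show ?thesis unfolding e using 2 by (simp add: filterlim_compose[OF tendsto_arctan_at_bot])
  next
    case 3
    then show ?thesis by simp
  qed
qed

lemma AT_lim:
  assumes ac: "a < c"
  shows "((\<lambda>n. AT (1 / (real n + 1)) t a c) \<longlongrightarrow> phi a c t) sequentially"
proof -
  have "((\<lambda>n. AT (1 / (real n + 1)) t a c) \<longlongrightarrow> (pi / 2 * sgn (c - t) - pi / 2 * sgn (a - t)) / pi) sequentially"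
    unfolding AT_def by (intro tendsto_intros arctan_lim) simp
  moreover have "(pi / 2 * sgn (c - t) - pi / 2 * sgn (a - t)) / pi = phi a c t"
    using ac unfolding phi_def by (auto simp: sgn_if)
  ultimately show ?thesis by simp
qed

definition Phi :: "real measure \<Rightarrow> real \<Rightarrow> real \<Rightarrow> real" where
  "Phi \<mu> a c = measure \<mu> {a<..<c} + measure \<mu> {a} / 2 + measure \<mu> {c} / 2"

lemma phi_integral:
  assumes rp: "real_prob \<mu>" and ac: "a < c"
  shows "(\<integral>t. phi a c t \<partial>\<mu>) = Phi \<mu> a c"
proof -
  interpret prob_space \<mu> using real_probD[OF rp] by auto
  have sets: "sets \<mu> = sets borel" using real_probD[OF rp] by auto
  have sp: "space \<mu> = UNIV" using real_probD[OF rp] by auto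
  have e: "phi a c t = indicator {a<..<c} t + indicator {a} t / (2::real) + indicator {c} t / (2::real)" for t
    using ac unfolding phi_def by (auto simp: indicator_def)
  have i: "integrable \<mu> (indicator A :: real \<Rightarrow> real)" if "A \<in> sets borel" for A
  proof -
    have "A \<inter> space \<mu> \<in> sets \<mu>" using that sets sp by simp
    moreover have "emeasure \<mu> (A \<inter> space \<mu>) < \<infinity>" by (simp add: emeasure_eq_measure)
    ultimately show ?thesis unfolding integrable_indicator_iff by blast
  qed
  have i1: "integrable \<mu> (indicator {a<..<c} :: real \<Rightarrow> real)" by (rule i) simp
  have i2: "integrable \<mu> (\<lambda>t. indicator {a} t / (2::real))" by (rule integrable_divide_zero) (rule i, simp)
  have i3: "integrable \<mu> (\<lambda>t. indicator {c} t / (2::real))" by (rule integrable_divide_zero) (rule i, simp)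
  have "(\<integral>t. phi a c t \<partial>\<mu>) = (\<integral>t. (indicator {a<..<c} t + indicator {a} t / (2::real)) + indicator {c} t / (2::real) \<partial>\<mu>)"
    unfolding e ..
  also have "\<dots> = (\<integral>t. indicator {a<..<c} t + indicator {a} t / (2::real) \<partial>\<mu>) + (\<integral>t. indicator {c} t / (2::real) \<partial>\<mu>)"
    by (rule Bochner_Integration.integral_add[OF Bochner_Integration.integrable_add[OF i1 i2] i3])
  also have "(\<integral>t. indicator {a<..<c} t + indicator {a} t / (2::real) \<partial>\<mu>) = (\<integral>t. indicator {a<..<c} t \<partial>\<mu>) + (\<integral>t. indicator {a} t / (2::real) \<partial>\<mu>)"
    by (rule Bochner_Integration.integral_add[OF i1 i2])
  also have "(\<integral>t. indicator {a<..<c} t \<partial>\<mu>) = measure \<mu> {a<..<c}" using sp by simp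
  also have "(\<integral>t. indicator {a} t / (2::real) \<partial>\<mu>) = measure \<mu> {a} / 2" using sp by simp
  also have "(\<integral>t. indicator {c} t / (2::real) \<partial>\<mu>) = measure \<mu> {c} / 2" using sp by simp
  finally show ?thesis unfolding Phi_def .
qed


lemma inv_succ_lim: "((\<lambda>n. 1 / (real n + 1)) \<longlongrightarrow> 0) sequentially"
  by real_asymp

lemma Phi_eq:
  assumes rp: "real_prob \<mu>" and lin: "\<forall>z. Im z > 0 \<longrightarrow> F_transform \<mu> z = z + b" and ac: "a < c"
  shows "Phi \<mu> a c = (if Im b > 0 then AT (Im b) (- Re b) a c else phi a c (- Re b))"
proof -
  interpret prob_space \<mu> using real_probD[OF rp] by auto
  have sets: "sets \<mu> = sets borel" using real_probD[OF rp] by auto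
  have yn: "1 / (real n + 1) > 0" for n by simp
  have L1: "(\<lambda>n. \<integral>t. AT (1 / (real n + 1)) t a c \<partial>\<mu>) \<longlonglongrightarrow> (\<integral>t. phi a c t \<partial>\<mu>)"
  proof (rule integral_dominated_convergence[where w="\<lambda>_. 1"])
    show "(\<lambda>t. phi a c t) \<in> borel_measurable \<mu>"
      unfolding measurable_cong_sets[OF sets refl] phi_def by measurable
    show "(\<lambda>t. AT (1 / (real n + 1)) t a c) \<in> borel_measurable \<mu>" for n
      unfolding measurable_cong_sets[OF sets refl] AT_def by measurable
    show "integrable \<mu> (\<lambda>_. 1::real)" by simp
    show "AE t in \<mu>. (\<lambda>n. AT (1 / (real n + 1)) t a c) \<longlonglongrightarrow> phi a c t"
      by (intro AE_I2 AT_lim ac)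
    show "AE t in \<mu>. norm (AT (1 / (real n + 1)) t a c) \<le> 1" for n
    proof (rule AE_I2)
      fix t
      have "0 \<le> AT (1 / (real n + 1)) t a c" using ac by (intro AT_nonneg) auto
      then show "norm (AT (1 / (real n + 1)) t a c) \<le> 1" using AT_le1 by simp
    qed
  qed
  have L2: "(\<lambda>n. \<integral>t. AT (1 / (real n + 1)) t a c \<partial>\<mu>) = (\<lambda>n. AT (1 / (real n + 1) + Im b) (- Re b) a c)"
    using ac by (intro ext AT_eq[OF rp lin]) auto
  have L3: "(\<lambda>n. AT (1 / (real n + 1) + Im b) (- Re b) a c) \<longlonglongrightarrow>
      (if Im b > 0 then AT (Im b) (- Re b) a c else phi a c (- Re b))"
  proof (cases "Im b > 0")
    case True
    have "(\<lambda>n. AT (1 / (real n + 1) + Im b) (- Re b) a c) \<longlonglongrightarrow> AT (0 + Im b) (- Re b) a c"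
      unfolding AT_def using True by (intro tendsto_intros inv_succ_lim) auto
    then show ?thesis using True by simp
  next
    case False
    then have "Im b = 0" using Im_b_nonneg[OF rp lin] by simp
    then show ?thesis using False AT_lim[OF ac, of "- Re b"] by simp
  qed
  have "(\<integral>t. phi a c t \<partial>\<mu>) = (if Im b > 0 then AT (Im b) (- Re b) a c else phi a c (- Re b))"
    using LIMSEQ_unique[OF L1] L3 unfolding L2 by blast
  then show ?thesis using phi_integral[OF rp ac] by simp
qed

lemma cauchy_Ioc:
  assumes t: "t > 0" and ac: "a \<le> c"
  shows "emeasure (cauchy_distr m t) {a<..c} = ennreal (AT t m a c)"
proof -
  have "emeasure (cauchy_distr m t) {a<..c} = (\<integral>\<^sup>+ x. ennreal (t / (pi * ((x - m)\<^sup>2 + t\<^sup>2))) * indicator {a<..c} x \<partial>lborel)"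
    unfolding cauchy_distr_def by (rule emeasure_density) auto
  also have "\<dots> = (\<integral>\<^sup>+ x. ennreal (Pk t (x - m)) * indicator {a..c} x \<partial>lborel)"
    by (intro nn_integral_cong_AE, use AE_lborel_singleton[of a] in eventually_elim)
       (auto simp: Pk_def indicator_def)
  also have "\<dots> = ennreal (AT t m a c)" by (rule Pk_FTC[OF t ac])
  finally show ?thesis .
qed

lemma ident_pos:
  assumes rp: "real_prob \<mu>" and lin: "\<forall>z. Im z > 0 \<longrightarrow> F_transform \<mu> z = z + b" and bpos: "Im b > 0"
  shows "\<mu> = cauchy_distr (- Re b) (Im b)"
proof -
  interpret prob_space \<mu> using real_probD[OF rp] by auto
  have sets: "sets \<mu> = sets borel" using real_probD[OF rp] by auto
  have sp: "space \<mu> = UNIV" using real_probD[OF rp] by auto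
  define m where "m = - Re b"
  define \<beta> where "\<beta> = Im b"
  have \<beta>: "\<beta> > 0" using bpos by (simp add: \<beta>_def)
  have PhiK: "Phi \<mu> a c = AT \<beta> m a c" if "a < c" for a c
    using Phi_eq[OF rp lin that] bpos by (simp add: m_def \<beta>_def)
  have ev: "A \<in> sets \<mu>" if "A \<in> sets borel" for A using that sets by simp
  have atom0: "measure \<mu> {a} = 0" for a
  proof -
    have le: "measure \<mu> {a} \<le> AT \<beta> m (a - 1 / (real n + 1)) (a + 1 / (real n + 1))" for n
    proof -
      define e where "e = 1 / (real n + 1)"
      have e: "e > 0" by (simp add: e_def)
      have "measure \<mu> {a} \<le> measure \<mu> {a - e<..<a + e}"
        using e by (intro finite_measure_mono ev) auto
      also have "\<dots> \<le> Phi \<mu> (a - e) (a + e)" unfolding Phi_def by simp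
      also have "\<dots> = AT \<beta> m (a - e) (a + e)" using e by (intro PhiK) simp
      finally show ?thesis unfolding e_def .
    qed
    have lim: "(\<lambda>n. AT \<beta> m (a - 1 / (real n + 1)) (a + 1 / (real n + 1))) \<longlonglongrightarrow> AT \<beta> m (a - 0) (a + 0)"
      unfolding AT_def using \<beta> by (intro tendsto_intros inv_succ_lim) auto
    have "measure \<mu> {a} \<le> AT \<beta> m (a - 0) (a + 0)"
      by (rule LIMSEQ_le_const[OF lim]) (use le in auto)
    moreover have "AT \<beta> m (a - 0) (a + 0) = 0" by (simp add: AT_def)
    ultimately show ?thesis using measure_nonneg[of \<mu> "{a}"] by linarith
  qed
  have Ioc: "emeasure \<mu> {a<..c} = ennreal (AT \<beta> m a c)" if ac: "a < c" for a c
  proof -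
    have "emeasure \<mu> {a<..c} = emeasure \<mu> ({a<..<c} \<union> {c})"
      using ac by (intro arg_cong[where f="emeasure \<mu>"]) auto
    also have "\<dots> = emeasure \<mu> {a<..<c} + emeasure \<mu> {c}"
      by (rule plus_emeasure[symmetric]) (auto intro: ev)
    also have "\<dots> = ennreal (measure \<mu> {a<..<c})"
      using atom0[of c] by (simp add: emeasure_eq_measure)
    also have "measure \<mu> {a<..<c} = Phi \<mu> a c" unfolding Phi_def using atom0 by simp
    also have "\<dots> = AT \<beta> m a c" by (rule PhiK[OF ac])
    finally show ?thesis .
  qed
  define E where "E = range (\<lambda>(a, c). {a<..c::real})"
  have sE: "sets borel = sigma_sets UNIV E"
    unfolding E_def by (subst borel_sigma_sets_Ioc) (simp add: sets_measure_of)
  show ?thesis unfolding m_def[symmetric] \<beta>_def[symmetric]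
  proof (rule measure_eqI_generator_eq[where E=E and \<Omega>=UNIV and A="\<lambda>i. {- real i<..real i}"])
    show "Int_stable E"
    proof (rule Int_stableI)
      fix X Y assume "X \<in> E" "Y \<in> E"
      then obtain a1 c1 a2 c2 where "X = {a1<..c1}" "Y = {a2<..c2}" unfolding E_def by auto
      then have "X \<inter> Y = {max a1 a2<..min c1 c2}" by simp
      then show "X \<inter> Y \<in> E" unfolding E_def by auto
    qed
    show "E \<subseteq> Pow UNIV" by simp
    show "emeasure \<mu> X = emeasure (cauchy_distr m \<beta>) X" if "X \<in> E" for X
    proof -
      obtain a c where X: "X = {a<..c}" using \<open>X \<in> E\<close> unfolding E_def by auto
      show ?thesis
      proof (cases "a < c")
        case True
        then show ?thesis unfolding X using Ioc[OF True] cauchy_Ioc[OF \<beta>, of a c m] by simp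
      next
        case False
        then show ?thesis unfolding X by simp
      qed
    qed
    show "sets \<mu> = sigma_sets UNIV E" using sets sE by simp
    show "sets (cauchy_distr m \<beta>) = sigma_sets UNIV E" unfolding cauchy_distr_def using sE by simp
    show "range (\<lambda>i. {- real i<..real i}) \<subseteq> E" unfolding E_def by auto
    show "(\<Union>i. {- real i<..real i}) = UNIV"
    proof (intro set_eqI iffI)
      fix x :: real
      obtain i :: nat where "\<bar>x\<bar> < real i" using reals_Archimedean2 by blast
      then have "x \<in> {- real i<..real i}" by auto
      then show "x \<in> (\<Union>i. {- real i<..real i})" by blast
    qed auto
    show "emeasure \<mu> {- real i<..real i} \<noteq> \<infinity>" for i by (simp add: emeasure_eq_measure)
  qed
qed

lemma ident_zero:
  assumes rp: "real_prob \<mu>" and lin: "\<forall>z. Im z > 0 \<longrightarrow> F_transform \<mu> z = z + b" and b0: "\<not> Im b > 0"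
  shows "\<mu> = return borel (- Re b)"
proof -
  interpret prob_space \<mu> using real_probD[OF rp] by auto
  have sets: "sets \<mu> = sets borel" using real_probD[OF rp] by auto
  have sp: "space \<mu> = UNIV" using real_probD[OF rp] by auto
  define m where "m = - Re b"
  have ev: "A \<in> sets \<mu>" if "A \<in> sets borel" for A using that sets by simp
  have open1: "measure \<mu> {m - e<..<m + e} = 1" if e: "e > 0" for e
  proof -
    have P: "Phi \<mu> (m - e) (m + e) = 1"
      using Phi_eq[OF rp lin, of "m - e" "m + e"] b0 e by (simp add: phi_def m_def)
    have "measure \<mu> ({m - e<..<m + e} \<union> {m - e} \<union> {m + e}) =
        measure \<mu> {m - e<..<m + e} + measure \<mu> {m - e} + measure \<mu> {m + e}"
    proof -
      have "measure \<mu> ({m - e<..<m + e} \<union> {m - e} \<union> {m + e}) = measure \<mu> ({m - e<..<m + e} \<union> {m - e}) + measure \<mu> {m + e}"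
        using e by (intro finite_measure_Union ev) auto
      also have "measure \<mu> ({m - e<..<m + e} \<union> {m - e}) = measure \<mu> {m - e<..<m + e} + measure \<mu> {m - e}"
        using e by (intro finite_measure_Union ev) auto
      finally show ?thesis .
    qed
    moreover have "measure \<mu> ({m - e<..<m + e} \<union> {m - e} \<union> {m + e}) \<le> 1" by (rule prob_le_1)
    moreover have "0 \<le> measure \<mu> {m - e}" "0 \<le> measure \<mu> {m + e}" by simp_all
    ultimately show ?thesis using P unfolding Phi_def by linarith
  qed
  define N where "N = (\<lambda>n::nat. UNIV - {m - 1 / (real n + 1)<..<m + 1 / (real n + 1)})"
  have N0: "emeasure \<mu> (N n) = 0" for n
  proof -
    have "prob (space \<mu> - {m - 1 / (real n + 1)<..<m + 1 / (real n + 1)}) = 1 - prob {m - 1 / (real n + 1)<..<m + 1 / (real n + 1)}"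
      by (intro prob_compl ev) simp
    also have "\<dots> = 0" using open1[of "1 / (real n + 1)"] by simp
    finally show ?thesis unfolding N_def sp by (simp add: emeasure_eq_measure)
  qed
  have UN: "(\<Union>n. N n) = UNIV - {m}"
  proof (intro set_eqI iffI)
    fix x assume "x \<in> (\<Union>n. N n)"
    then show "x \<in> UNIV - {m}" unfolding N_def by auto
  next
    fix x assume "x \<in> UNIV - {m}"
    then have "\<bar>x - m\<bar> > 0" by simp
    then obtain n :: nat where n: "1 / (real n + 1) < \<bar>x - m\<bar>"
      using reals_Archimedean[of "\<bar>x - m\<bar>"] by (auto simp: inverse_eq_divide add.commute)
    then show "x \<in> (\<Union>n. N n)" unfolding N_def by (auto intro!: exI[of _ n])
  qed
  have "emeasure \<mu> (\<Union>n. N n) = 0"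
    by (rule emeasure_UN_eq_0[OF N0]) (auto simp: N_def intro: ev)
  then have null: "emeasure \<mu> (UNIV - {m}) = 0" unfolding UN .
  show ?thesis unfolding m_def[symmetric]
  proof (rule measure_eqI)
    show "sets \<mu> = sets (return borel m)" using sets by simp
    fix A assume A: "A \<in> sets \<mu>"
    have Ab: "A \<in> sets borel" using A sets by simp
    show "emeasure \<mu> A = emeasure (return borel m) A"
    proof (cases "m \<in> A")
      case True
      have "emeasure \<mu> (UNIV - A) \<le> emeasure \<mu> (UNIV - {m})"
        using True A by (intro emeasure_mono) (auto simp: sp intro: ev)
      then have "prob (space \<mu> - A) \<le> 0" using null sp by (simp add: emeasure_eq_measure)
      then have "prob (space \<mu> - A) = 0" using measure_nonneg[of \<mu> "space \<mu> - A"] by linarith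
      then have "prob A = 1" using prob_compl[OF A] by simp
      then show ?thesis using True Ab by (simp add: emeasure_eq_measure)
    next
      case False
      have "emeasure \<mu> A \<le> emeasure \<mu> (UNIV - {m})"
        using False A by (intro emeasure_mono) (auto intro: ev)
      then show ?thesis using False Ab null by simp
    qed
  qed
qed


theorem lemma3p12:
  assumes "\<mu> \<in> class_L" and "unimodal \<mu>"
  shows "(\<exists>a. \<mu> = return borel a) \<or> (\<exists>a t. t > 0 \<and> \<mu> = cauchy_distr a t)"
proof -
  from assms(1) have rp: "real_prob \<mu>"
    and per: "\<forall>z. Im z > 0 \<longrightarrow> F_transform \<mu> (z + 2 * complex_of_real pi) = F_transform \<mu> z + 2 * complex_of_real pi"
    unfolding class_L_def by auto
  from assms(2) obtain c f where f: "f \<in> borel_measurable borel" "\<forall>x. 0 \<le> f x"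
    and dec: "\<forall>x y. c \<le> x \<longrightarrow> x \<le> y \<longrightarrow> f y \<le> f x"
    and hyp: "\<forall>A \<in> sets borel. emeasure \<mu> A =
        emeasure \<mu> {c} * indicator A c + (\<integral>\<^sup>+ x. ennreal (f x) * indicator A x \<partial>lborel)"
    unfolding unimodal_def unimodal_at_def by blast
  have cst: "Im (F_transform \<mu> (Complex x y)) = Im (F_transform \<mu> (Complex 0 y))" if "y > 0" for x y
    using key_le[OF rp per f(1) f(2) dec hyp that, of x 0] key_le[OF rp per f(1) f(2) dec hyp that, of 0 x]
    by linarith
  obtain b where lin: "\<forall>z. Im z > 0 \<longrightarrow> F_transform \<mu> z = z + b"
    using F_linear[OF rp per cst] by blast
  show ?thesis
  proof (cases "Im b > 0")
    case True
    then show ?thesis using ident_pos[OF rp lin True] by blast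
  next
    case False
    then show ?thesis using ident_zero[OF rp lin False] by blast
  qed
qed

end
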